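(* Let $p$ be an odd prime, $n$ a positive integer, $q=p^n$ (so $q^2=p^{2n}$), and let $k$ be an integer with $1\le k\le n$ such that $2n/\gcd(2n,k)$ is odd. Let $f$ be either $f(x)=x^2$ or $f(x)=x^{p^k+1}$ on $\mathbb F_{q^2}$, and let $\theta\in\mathbb F_{q^2}^*$ be such that $\theta^{q+1}$ is a nonsquare in $\mathbb F_q$. Then the unital $\mathcal U_\theta:=\{(x,t\theta):x\in\mathbb F_{q^2},t\in\mathbb F_q\}\cup\{(\infty)\}$ in $\Pi(f)$ contains an O'Nan configuration.
   Context: For a planar function $f$ on $\mathbb F_{q^2}$ (i.e.\ $x\mapsto f(x+a)-f(x)$ is bijective for each $a\neq0$; both functions above are planar), $\Pi(f)$ is the projective plane with points $(x,y)\in\mathbb F_{q^2}^2$ and $(a)$ for $a\in\mathbb F_{q^2}\cup\{\infty\}$, lines $L_{a,b}=\{(x,f(x+a)-b):x\in\mathbb F_{q^2}\}\cup\{(a)\}$, $N_a=\{(a,y):y\in\mathbb F_{q^2}\}\cup\{(\infty)\}$ ($a,b\in\mathbb F_{q^2}$), $L_\infty=\{(a):a\in\mathbb F_{q^2}\cup\{\infty\}\}$. A unital is a set of $q^3+1$ points meeting every line in $1$ or $q+1$ points, regarded as a design whose blocks are its intersections with lines meeting it in $q+1$ points. An O'Nan configuration consists of four blocks, any two of which meet, such that the six pairwise intersection points are distinct. *)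

theory Defs
  imports "HOL-Computational_Algebra.Primes"
begin

text \<open>Points of the projective plane Pi(f) over a field 'a (= F_{q^2}):
  affine points (x,y), and points at infinity (a) for a in 'a, and (infinity).\<close>
datatype 'a pt = Aff 'a 'a | Dir 'a | DirInf

datatype 'a ln = L 'a 'a | N 'a | LInf

fun pts :: "('a::ring \<Rightarrow> 'a) \<Rightarrow> 'a ln \<Rightarrow> 'a pt set" where
  "pts f (L a b) = {Aff x (f (x + a) - b) | x. True} \<union> {Dir a}"
| "pts f (N a) = {Aff a y | y. True} \<union> {DirInf}"
| "pts f LInf = range Dir \<union> {DirInf}"

definition subfield_q :: "nat \<Rightarrow> 'a::field set" where
  "subfield_q q = {t. t ^ q = t}"

definition U_theta :: "nat \<Rightarrow> 'a::field \<Rightarrow> 'a pt set" where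
  "U_theta q \<theta> = {Aff x (t * \<theta>) | x t. t \<in> subfield_q q} \<union> {DirInf}"

definition is_block :: "('a::ring \<Rightarrow> 'a) \<Rightarrow> nat \<Rightarrow> 'a pt set \<Rightarrow> 'a pt set \<Rightarrow> bool" where
  "is_block f q U B \<longleftrightarrow> (\<exists>l. B = U \<inter> pts f l \<and> card B = q + 1)"

definition has_ONan :: "('a::ring \<Rightarrow> 'a) \<Rightarrow> nat \<Rightarrow> 'a pt set \<Rightarrow> bool" where
  "has_ONan f q U \<longleftrightarrow>
     (\<exists>B :: nat \<Rightarrow> 'a pt set. \<exists>P :: nat \<Rightarrow> nat \<Rightarrow> 'a pt.
        (\<forall>i<4. is_block f q U (B i)) \<and>
        (\<forall>i<4. \<forall>j<4. i \<noteq> j \<longrightarrow> B i \<inter> B j = {P i j}) \<and>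
        inj_on (\<lambda>(i,j). P i j) {(i,j). i < j \<and> j < (4::nat)})"

end

theory Submission imports Defs "HOL-Number_Theory.Residues" "HOL-Computational_Algebra.Polynomial"
begin

locale ctx =
  fixes p n s M :: nat and f :: "'a::{field,finite} \<Rightarrow> 'a" and \<theta> :: 'a
  assumes p_prime: "prime p" and p_odd: "odd p" and n_pos: "n \<ge> 1"
    and card_F: "card (UNIV :: 'a set) = p ^ (2 * n)"
    and s_pow: "\<exists>m. s = p ^ m" and M_odd: "odd M" and sM: "\<And>x::'a. x ^ (s ^ M) = x"
    and f_eq: "f = (\<lambda>x. x ^ (s + 1))"
    and th_nz: "\<theta> \<noteq> 0"
    and hyp: "\<not> (\<exists>y \<in> subfield_q (p ^ n). y ^ 2 = \<theta> ^ (p ^ n + 1))"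
begin

abbreviation "q \<equiv> p ^ n"
abbreviation "K \<equiv> (subfield_q q :: 'a set)"

lemma CHAR_p: "CHAR('a) = p"
proof -
  have "CHAR('a) > 0" by (rule finite_imp_CHAR_pos) simp
  hence pr: "prime CHAR('a)" by (rule prime_CHAR_semidom)
  have "CHAR('a) dvd p ^ (2*n)" using CHAR_dvd_CARD card_F by metis
  hence "CHAR('a) dvd p" using pr prime_dvd_power by blast
  thus ?thesis using pr p_prime by (simp add: primes_dvd_imp_eq)
qed

lemma frob: "(x + y :: 'a) ^ (p ^ j) = x ^ (p ^ j) + y ^ (p ^ j)"
  by (rule freshmans_dream') (auto simp: CHAR_p p_prime)

lemma frob_minus: "(- x :: 'a) ^ (p ^ j) = - (x ^ (p ^ j))"
proof -
  have "odd (p ^ j)" using p_odd by simp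
  thus ?thesis by (simp add: power_minus_odd)
qed

lemma frob_diff: "(x - y :: 'a) ^ (p ^ j) = x ^ (p ^ j) - y ^ (p ^ j)"
  using frob[of x "-y" j] frob_minus[of y j] by simp

lemma two_nz: "(2::'a) \<noteq> 0"
proof
  assume "(2::'a) = 0"
  hence "of_nat 2 = (0::'a)" by simp
  hence "p dvd 2" using of_nat_eq_0_iff_char_dvd CHAR_p by metis
  hence "p = 2" using p_prime two_is_prime_nat by (simp add: primes_dvd_imp_eq)
  thus False using p_odd by simp
qed

lemma pow_card: "(x::'a) ^ (p ^ (2 * n)) = x"
proof (cases "x = 0")
  case False
  have "x * (\<Prod>y\<in>UNIV-{0}. x * y) = x * x ^ (card (UNIV :: 'a set) - 1) * \<Prod>(UNIV-{0})"
    by (simp add: prod.distrib mult_ac)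
  also have "x * x ^ (card (UNIV :: 'a set) - 1) = x ^ Suc (card (UNIV :: 'a set) - 1)"
    by (subst power_Suc) auto
  also have "Suc (card (UNIV :: 'a set) - 1) = card (UNIV :: 'a set)"
    using finite_UNIV_card_ge_0[where ?'a = 'a] by simp
  also have "(\<Prod>y\<in>UNIV-{0}. x * y) = (\<Prod>y\<in>UNIV-{0}. y)"
    by (rule prod.reindex_bij_witness[of _ "\<lambda>y. y / x" "\<lambda>y. x * y"]) (use False in auto)
  finally show ?thesis
    by (simp add: card_F)
qed (use n_pos p_prime prime_gt_0_nat in auto)

lemma qq: "p ^ (2 * n) = q * q"
  by (simp add: mult_2 power_add)

lemma q_gt1: "q > 1"
proof -
  have "p > 1" using p_prime prime_gt_1_nat by simp
  thus ?thesis by (rule one_less_power) (use n_pos in auto)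
qed

lemma q_odd: "odd q" using p_odd by simp

lemma pow_qq: "(x::'a) ^ (q * q) = x"
  using pow_card[of x] qq by simp

lemma pow_qq': "((x::'a) ^ q) ^ q = x"
  using pow_qq[of x] by (simp add: power_mult)

lemma K_iff: "x \<in> K \<longleftrightarrow> x ^ q = x"
  by (simp add: subfield_q_def)

lemma K_add: "x \<in> K \<Longrightarrow> y \<in> K \<Longrightarrow> x + y \<in> K"
  by (simp add: K_iff frob)
lemma K_uminus: "x \<in> K \<Longrightarrow> - x \<in> K"
  by (simp add: K_iff frob_minus)
lemma K_diff: "x \<in> K \<Longrightarrow> y \<in> K \<Longrightarrow> x - y \<in> K"
  by (simp add: K_iff frob_diff)
lemma K_mult: "x \<in> K \<Longrightarrow> y \<in> K \<Longrightarrow> x * y \<in> K"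
  by (simp add: K_iff power_mult_distrib)
lemma K_divide: "x \<in> K \<Longrightarrow> y \<in> K \<Longrightarrow> x / y \<in> K"
  by (simp add: K_iff power_divide)
lemma K_power: "x \<in> K \<Longrightarrow> x ^ j \<in> K"
proof -
  assume "x \<in> K"
  have "(x ^ j) ^ q = (x ^ q) ^ j" by (metis power_mult mult.commute)
  thus ?thesis using \<open>x \<in> K\<close> by (simp add: K_iff)
qed
lemma K_0: "0 \<in> K" using p_prime prime_gt_0_nat by (simp add: K_iff)
lemma K_1: "1 \<in> K" by (simp add: K_iff)
lemma K_of_nat: "of_nat j \<in> K"
  by (induction j) (auto intro: K_add K_0 K_1)
lemma K_numeral: "numeral j \<in> K"
  using K_of_nat[of "numeral j"] by simp

lemma norm_K: "(y::'a) ^ (q + 1) \<in> K"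
proof -
  have "(y ^ (q + 1)) ^ q = y ^ (q * q) * y ^ q"
    by (simp flip: power_mult power_add add: algebra_simps)
  also have "\<dots> = y ^ (q + 1)" by (simp add: pow_qq)
  finally show ?thesis by (simp add: K_iff)
qed

lemma card_K_le: "card K \<le> q"
proof -
  let ?P = "monom (1::'a) q + (- [:0,1:])"
  have deg: "degree ?P = q"
    by (subst degree_add_eq_left) (use q_gt1 in \<open>auto simp: degree_monom_eq\<close>)
  have "?P \<noteq> 0"
  proof
    assume h: "?P = 0"
    have d0: "degree ?P = 0" unfolding h by simp
    have "q = 0" using deg d0 by metis
    with q_gt1 show False by linarith
  qed
  moreover have "K = {x. poly ?P x = 0}" by (auto simp: subfield_q_def poly_monom)
  ultimately show ?thesis using card_poly_roots_bound[of ?P] deg by simp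
qed

lemma card_additive:
  fixes T :: "'b::{ab_group_add,finite} \<Rightarrow> 'c::ab_group_add"
  assumes add: "\<And>x y. T (x + y) = T x + T y"
  shows "card (UNIV::'b set) = card (range T) * card {x. T x = 0}"
proof -
  have fib: "card {x. T x = w} = card {x. T x = 0}" if "w \<in> range T" for w
  proof -
    from that obtain z where z: "w = T z" by auto
    have sub1: "{x. T x = w} \<subseteq> (\<lambda>x. z + x) ` {x. T x = 0}"
    proof
      fix x assume "x \<in> {x. T x = w}"
      hence "T x = T z" by (simp add: z)
      moreover have "T x = T z + T (x - z)" using add[of z "x - z"] by simp
      ultimately show "x \<in> (\<lambda>x. z + x) ` {x. T x = 0}"
        by (intro image_eqI[of _ _ "x - z"]) auto
    qed
    have sub2: "(\<lambda>x. z + x) ` {x. T x = 0} \<subseteq> {x. T x = w}"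
      by (auto simp: z add)
    have "{x. T x = w} = (\<lambda>x. z + x) ` {x. T x = 0}" using sub1 sub2 by (rule antisym)
    moreover have "inj (\<lambda>x. z + x)" by (auto intro: injI)
    ultimately show ?thesis by (simp add: card_image inj_on_subset)
  qed
  have "(UNIV::'b set) = (\<Union>w\<in>range T. {x. T x = w})" by auto
  moreover have "card (\<Union>w\<in>range T. {x. T x = w}) = (\<Sum>w\<in>range T. card {x. T x = w})"
    by (rule card_UN_disjoint) auto
  ultimately have "card (UNIV::'b set) = (\<Sum>w\<in>range T. card {x. T x = w})" by simp
  also have "\<dots> = (\<Sum>w\<in>range T. card {x. T x = 0})" using fib by simp
  finally show ?thesis by simp
qed

lemma card_K: "card K = q"
proof -
  let ?T = "\<lambda>x::'a. x + x ^ q"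
  have add: "?T (x + y) = ?T x + ?T y" for x y by (simp add: frob algebra_simps)
  have rng: "range ?T \<subseteq> K"
  proof
    fix y assume "y \<in> range ?T"
    then obtain x where "y = ?T x" by auto
    thus "y \<in> K" by (simp add: K_iff frob pow_qq')
  qed
  let ?P = "monom (1::'a) q + [:0,1:]"
  have deg: "degree ?P = q"
    by (subst degree_add_eq_left) (use q_gt1 in \<open>auto simp: degree_monom_eq\<close>)
  have "?P \<noteq> 0"
  proof
    assume h: "?P = 0"
    have d0: "degree ?P = 0" unfolding h by simp
    have "q = 0" using deg d0 by metis
    with q_gt1 show False by linarith
  qed
  moreover have "{x. ?T x = 0} = {x. poly ?P x = 0}" by (auto simp: poly_monom algebra_simps)
  ultimately have ker: "card {x. ?T x = 0} \<le> q" using card_poly_roots_bound[of ?P] deg by simp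
  have "q * q = card (range ?T) * card {x. ?T x = 0}"
    using card_additive[of ?T] add card_F qq by simp
  also have "\<dots> \<le> card K * q"
    using card_mono[OF finite rng] ker by (rule mult_le_mono)
  finally have "q \<le> card K" using q_gt1 p_prime prime_gt_0_nat by simp
  thus ?thesis using card_K_le by simp
qed

lemma th_notK: "\<theta> \<notin> K"
proof
  assume h: "\<theta> \<in> K"
  hence "\<theta> ^ (q + 1) = \<theta> ^ 2" by (simp add: K_iff power2_eq_square)
  thus False using hyp h by auto
qed

definition T :: "'a set" where "T = (\<lambda>t. t * \<theta>) ` K"

lemma T_iff: "z \<in> T \<longleftrightarrow> z / \<theta> \<in> K"
proof
  assume "z \<in> T" thus "z / \<theta> \<in> K" using th_nz by (auto simp: T_def)
next
  assume "z / \<theta> \<in> K"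
  moreover have "z = (z / \<theta>) * \<theta>" using th_nz by simp
  ultimately show "z \<in> T" unfolding T_def by blast
qed

lemma T_mult: "t \<in> K \<Longrightarrow> t * \<theta> \<in> T" by (auto simp: T_def)
lemma T_0: "0 \<in> T" using T_mult[OF K_0] by simp
lemma T_add: "x \<in> T \<Longrightarrow> y \<in> T \<Longrightarrow> x + y \<in> T"
  by (simp add: T_iff add_divide_distrib K_add)
lemma T_diff: "x \<in> T \<Longrightarrow> y \<in> T \<Longrightarrow> x - y \<in> T"
  by (simp add: T_iff diff_divide_distrib K_diff)
lemma T_uminus: "x \<in> T \<Longrightarrow> - x \<in> T"
  by (simp add: T_iff K_uminus)

lemma card_T: "card T = q"
proof -
  have "inj_on (\<lambda>t. t * \<theta>) K" using th_nz by (auto intro: inj_onI)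
  thus ?thesis by (simp add: T_def card_image card_K)
qed

lemma KT_inter: "c \<in> K \<Longrightarrow> c \<in> T \<Longrightarrow> c = 0"
proof (rule ccontr)
  assume c: "c \<in> K" "c \<in> T" "c \<noteq> 0"
  then obtain t where t: "t \<in> K" "c = t * \<theta>" by (auto simp: T_def)
  hence "t \<noteq> 0" using c by auto
  hence "\<theta> = c / t" using t by simp
  moreover have "c / t \<in> K" using K_divide c(1) t(1) by blast
  ultimately have "\<theta> \<in> K" by simp
  thus False using th_notK by simp
qed

lemma decomp: "\<exists>c\<in>K. z - c \<in> T"
proof -
  let ?phi = "\<lambda>(a, b). a + b * \<theta>"
  have inj: "inj_on ?phi (K \<times> K)"
  proof (rule inj_onI, clarify)
    fix a b a' b' assume h: "a \<in> K" "b \<in> K" "a' \<in> K" "b' \<in> K" "a + b * \<theta> = a' + b' * \<theta>"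
    hence "(b - b') * \<theta> = a' - a" by (simp add: algebra_simps)
    hence "(b - b') * \<theta> \<in> K" using h K_diff by simp
    moreover have "(b - b') * \<theta> \<in> T" using h K_diff T_mult by simp
    ultimately have "(b - b') * \<theta> = 0" using KT_inter by blast
    hence "b = b'" using th_nz by simp
    thus "a = a' \<and> b = b'" using h by simp
  qed
  have "card (?phi ` (K \<times> K)) = q * q" using card_image[OF inj] by (simp add: card_K card_cartesian_product)
  hence "?phi ` (K \<times> K) = UNIV" using card_F qq by (intro card_subset_eq) auto
  hence "z \<in> ?phi ` (K \<times> K)" by simp
  then obtain a b where ab: "a \<in> K" "b \<in> K" "z = a + b * \<theta>" by auto
  thus ?thesis using T_mult by (intro bexI[of _ a]) auto
qed

lemma decomp_uniq: "c \<in> K \<Longrightarrow> c' \<in> K \<Longrightarrow> z - c \<in> T \<Longrightarrow> z - c' \<in> T \<Longrightarrow> c = c'"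
proof -
  assume h: "c \<in> K" "c' \<in> K" "z - c \<in> T" "z - c' \<in> T"
  hence "(z - c') - (z - c) \<in> T" by (rule_tac T_diff) auto
  moreover have "(z - c') - (z - c) = c - c'" by simp
  ultimately have "c - c' \<in> T" by simp
  moreover have "c - c' \<in> K" using h K_diff by simp
  ultimately show "c = c'" using KT_inter by fastforce
qed

subsection \<open>The Frobenius-type map x^s\<close>

lemma s_odd: "odd s"
proof -
  obtain m where "s = p ^ m" using s_pow by blast
  thus ?thesis using p_odd by simp
qed

lemma sig_add: "(x + y :: 'a) ^ s = x ^ s + y ^ s"
proof -
  obtain m where "s = p ^ m" using s_pow by blast
  thus ?thesis by (simp only: frob)
qed
lemma sig_minus: "(- x :: 'a) ^ s = - (x ^ s)" using s_odd by (simp add: power_minus_odd)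
lemma sig_diff: "(x - y :: 'a) ^ s = x ^ s - y ^ s"
  using sig_add[of x "-y"] sig_minus[of y] by simp

lemma eq_neg_zero: "(x::'a) = - x \<Longrightarrow> x = 0"
proof -
  assume "x = - x"
  hence h: "x + x = 0" by (simp only: eq_neg_iff_add_eq_0)
  have "2 * x = 0" by (simp add: mult_2 h)
  thus "x = 0" using two_nz by simp
qed

lemma iter_neg: "x ^ s = - x \<Longrightarrow> (x::'a) ^ (s ^ j) = (-1) ^ j * x"
proof (induction j)
  case (Suc j)
  have "x ^ (s ^ Suc j) = (x ^ (s ^ j)) ^ s" by (simp only: power_Suc2 power_mult)
  also have "\<dots> = ((-1) ^ j * x) ^ s" using Suc.IH[OF Suc.prems] by (simp only:)
  also have "\<dots> = ((-1) ^ j) ^ s * x ^ s" by (simp add: power_mult_distrib)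
  also have "((-1::'a) ^ j) ^ s = (-1) ^ j"
  proof -
    have m1: "(-1::'a) ^ s = -1" using s_odd by simp
    have "((-1::'a) ^ j) ^ s = ((-1) ^ s) ^ j" by (simp only: power_mult[symmetric] mult.commute)
    thus ?thesis using m1 by simp
  qed
  finally have "x ^ (s ^ Suc j) = (-1) ^ j * x ^ s" .
  thus ?case using Suc.prems by simp
qed simp

lemma no_neg: "(x::'a) ^ s = - x \<Longrightarrow> x = 0"
proof -
  assume h: "x ^ s = - x"
  have "x ^ (s ^ M) = (-1) ^ M * x" using iter_neg[OF h, of M] .
  hence e: "x = (-1) ^ M * x" by (simp only: sM)
  have "(-1) ^ M * x = - x" using M_odd by simp
  with e have "x = - x" by (rule trans)
  thus "x = 0" by (rule eq_neg_zero)
qed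

lemma iter_inv: "w ^ s = inverse w \<Longrightarrow> (w::'a) ^ (s ^ j) = (if even j then w else inverse w)"
proof (induction j)
  case (Suc j)
  have "w ^ (s ^ Suc j) = (w ^ (s ^ j)) ^ s" by (simp only: power_Suc2 power_mult)
  also have "\<dots> = (if even j then w else inverse w) ^ s" using Suc.IH[OF Suc.prems] by (simp only:)
  also have "\<dots> = (if even (Suc j) then w else inverse w)"
  proof (cases "even j")
    case True thus ?thesis using Suc.prems by simp
  next
    case False
    have "(inverse w) ^ s = inverse (w ^ s)" by (rule power_inverse)
    also have "\<dots> = w" using Suc.prems by simp
    finally show ?thesis using False by simp
  qed
  finally show ?case .
qed simp

lemma no_inv: "(w::'a) \<noteq> 0 \<Longrightarrow> w ^ s * w = 1 \<Longrightarrow> w = 1 \<or> w = -1"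
proof -
  assume h: "w \<noteq> 0" "w ^ s * w = 1"
  hence "w ^ s = inverse w" by (simp add: field_simps)
  hence "w ^ (s ^ M) = inverse w" using iter_inv[of w M] M_odd by simp
  hence "w = inverse w" by (simp only: sM)
  hence "w\<^sup>2 = 1" using h by (simp add: power2_eq_square field_simps)
  thus ?thesis by (simp add: power2_eq_1_iff)
qed

lemma f_alt: "f x = x ^ s * x" by (simp add: f_eq)

lemma f_0: "f 0 = 0" by (simp add: f_eq)

lemma anis: "f y \<in> T \<Longrightarrow> y = 0"
proof (rule ccontr)
  assume h: "f y \<in> T" "y \<noteq> 0"
  then obtain t where t: "t \<in> K" "f y = t * \<theta>" by (auto simp: T_def)
  have "f y \<noteq> 0" using h by (simp add: f_eq)
  hence t0: "t \<noteq> 0" using t by simp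
  obtain h2 where h2: "s + 1 = 2 * h2"
  proof -
    obtain b where "s = 2 * b + 1" using s_odd by (auto elim!: oddE)
    thus ?thesis using that[of "b + 1"] by simp
  qed
  define w where "w = y ^ (q + 1)"
  have wK: "w \<in> K" unfolding w_def by (rule norm_K)
  have "f y ^ (q + 1) = w ^ (s + 1)" unfolding f_eq w_def by (metis power_mult mult.commute)
  also have "\<dots> = (w ^ h2)\<^sup>2" unfolding h2 by (metis power_mult mult.commute)
  finally have e1: "f y ^ (q + 1) = (w ^ h2)\<^sup>2" .
  have "f y ^ (q + 1) = t ^ (q + 1) * \<theta> ^ (q + 1)" by (simp add: t power_mult_distrib)
  also have "t ^ (q + 1) = t\<^sup>2" using t(1) by (simp add: K_iff power2_eq_square)
  finally have c0: "f y ^ (q + 1) = t\<^sup>2 * \<theta> ^ (q + 1)" .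
  have c1: "(w ^ h2)\<^sup>2 = t\<^sup>2 * \<theta> ^ (q + 1)" using e1[symmetric] c0 by (rule trans)
  have "\<theta> ^ (q + 1) = (w ^ h2)\<^sup>2 / t\<^sup>2" using t0 by (simp add: c1)
  also have "\<dots> = (w ^ h2 / t)\<^sup>2" by (simp add: power_divide)
  finally have "\<theta> ^ (q + 1) = (w ^ h2 / t)\<^sup>2" .
  moreover have "w ^ h2 / t \<in> K" using wK t by (intro K_divide K_power)
  ultimately have "\<exists>y\<in>K. y\<^sup>2 = \<theta> ^ (q + 1)" by (intro bexI[of _ "w ^ h2 / t"]) simp_all
  thus False using hyp by simp
qed

lemma plan_inj: "e \<noteq> 0 \<Longrightarrow> inj (\<lambda>y. f (y + e) - f y)"
proof (rule injI)
  fix y1 y2 assume e: "e \<noteq> 0" and h: "f (y1 + e) - f y1 = f (y2 + e) - f y2"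
  have expand: "f (y + e) - f y = y * e ^ s + e * y ^ s + f e" for y
    by (simp add: f_alt sig_add algebra_simps)
  have h': "y1 * e ^ s + e * y1 ^ s + f e = y2 * e ^ s + e * y2 ^ s + f e"
    using h by (simp only: expand)
  have "(y1 - y2) * e ^ s + e * (y1 - y2) ^ s = 0"
    using h' by (simp add: sig_diff algebra_simps)
  define w where "w = (y1 - y2) / e"
  have "y1 - y2 = w * e" using e by (simp add: w_def)
  note key = \<open>(y1 - y2) * e ^ s + e * (y1 - y2) ^ s = 0\<close>[unfolded \<open>y1 - y2 = w * e\<close>]
  have "(e * e ^ s) * (w + w ^ s) = w * e * e ^ s + e * (w * e) ^ s"
    by (simp add: algebra_simps power_mult_distrib)
  also have "\<dots> = 0" by (rule key)
  finally have pr: "(e * e ^ s) * (w + w ^ s) = 0" .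
  moreover have "e * e ^ s \<noteq> 0" using e by simp
  ultimately have "w + w ^ s = 0" by simp
  hence "w ^ s = - w" by (simp only: add_eq_0_iff)
  hence "w = 0" by (rule no_neg)
  thus "y1 = y2" using e by (simp add: w_def)
qed

lemma plan_bij: "e \<noteq> 0 \<Longrightarrow> bij (\<lambda>y. f (y + e) - f y)"
  using plan_inj by (simp add: bij_def finite_UNIV_inj_surj)

subsection \<open>Counting\<close>

lemma card_bij_preimage: "bij (g::'a \<Rightarrow> 'a) \<Longrightarrow> card {y. g y \<in> A} = card A"
proof -
  assume b: "bij g"
  hence "g ` {y. g y \<in> A} = A" by (auto simp: bij_def surj_def)
  moreover have "inj_on g {y. g y \<in> A}" using b by (auto simp: bij_def inj_on_def)
  ultimately show ?thesis by (metis card_image)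
qed

definition S :: "'a \<Rightarrow> 'a set" where "S c = {y. f y - c \<in> T}"

lemma S_shift: "b - c \<in> T \<Longrightarrow> S b = S c"
proof -
  assume h: "b - c \<in> T"
  have "f y - b \<in> T \<longleftrightarrow> f y - c \<in> T" for y
  proof
    assume "f y - b \<in> T" hence "(f y - b) + (b - c) \<in> T" using h T_add by blast
    thus "f y - c \<in> T" by simp
  next
    assume "f y - c \<in> T" hence "(f y - c) - (b - c) \<in> T" using h T_diff by blast
    thus "f y - b \<in> T" by simp
  qed
  thus ?thesis by (simp add: S_def)
qed

lemma S_disj: "c \<in> K \<Longrightarrow> c' \<in> K \<Longrightarrow> c \<noteq> c' \<Longrightarrow> S c \<inter> S c' = {}"
  using decomp_uniq by (auto simp: S_def)

lemma sum1: "(\<Sum>c\<in>K. card (S c)) = q * q"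
proof -
  have "(UNIV::'a set) = (\<Union>c\<in>K. S c)"
  proof (intro equalityI subsetI)
    fix y
    obtain c where "c \<in> K" "f y - c \<in> T" using decomp by blast
    thus "y \<in> (\<Union>c\<in>K. S c)" by (auto simp: S_def)
  qed simp
  moreover have "card (\<Union>c\<in>K. S c) = (\<Sum>c\<in>K. card (S c))"
    by (rule card_UN_disjoint) (use S_disj in auto)
  ultimately show ?thesis using card_F qq by simp
qed

definition R :: "('a \<times> 'a) set" where "R = {(y1, y2). f y1 - f y2 \<in> T}"

lemma card_R1: "card R = (\<Sum>c\<in>K. card (S c) * card (S c))"
proof -
  have "R = (\<Union>c\<in>K. S c \<times> S c)"
  proof (intro equalityI subsetI, clarify)
    fix y1 y2
      assume h: "(y1, y2) \<in> R"
      obtain c where c: "c \<in> K" "f y2 - c \<in> T" using decomp by blast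
      have "f y1 - f y2 \<in> T" using h by (simp add: R_def)
      hence "(f y1 - f y2) + (f y2 - c) \<in> T" using c(2) by (rule T_add)
      hence "f y1 - c \<in> T" by simp
      thus "(y1, y2) \<in> (\<Union>c\<in>K. S c \<times> S c)" using c by (auto simp: S_def)
  next
    fix z assume "z \<in> (\<Union>c\<in>K. S c \<times> S c)"
    then obtain c y1 y2 where c: "z = (y1, y2)" "f y1 - c \<in> T" "f y2 - c \<in> T" by (auto simp: S_def)
    have "(f y1 - c) - (f y2 - c) \<in> T" using c T_diff by blast
    thus "z \<in> R" by (simp add: R_def c)
  qed
  moreover have "card (\<Union>c\<in>K. S c \<times> S c) = (\<Sum>c\<in>K. card (S c \<times> S c))"
    by (rule card_UN_disjoint) (use S_disj in auto)
  ultimately show ?thesis by (simp add: card_cartesian_product)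
qed

lemma card_R2: "card R = q * q + (q * q - 1) * q"
proof -
  let ?G = "\<lambda>e. {y. f (y + e) - f y \<in> T}"
  have "R = (\<lambda>(e, y). (y + e, y)) ` (SIGMA e:UNIV. ?G e)"
  proof (intro equalityI subsetI, clarify)
    fix y1 y2
    assume "(y1, y2) \<in> R"
    thus "(y1, y2) \<in> (\<lambda>(e, y). (y + e, y)) ` (SIGMA e:UNIV. ?G e)"
      by (intro image_eqI[of _ _ "(y1 - y2, y2)"]) (auto simp: R_def)
  next
    fix z assume "z \<in> (\<lambda>(e, y). (y + e, y)) ` (SIGMA e:UNIV. ?G e)"
    thus "z \<in> R" by (auto simp: R_def)
  qed
  moreover have "inj_on (\<lambda>(e, y). (y + e, y)) (SIGMA e:UNIV. ?G e)"
    by (auto simp: inj_on_def)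
  ultimately have c1: "card R = card (SIGMA e:UNIV. ?G e)" by (simp add: card_image)
  have c2: "card (SIGMA e:UNIV. ?G e) = (\<Sum>e\<in>UNIV. card (?G e))" by (rule card_SigmaI) auto
  have c3: "(\<Sum>e\<in>UNIV. card (?G e)) = card (?G 0) + (\<Sum>e\<in>UNIV - {0}. card (?G e))"
    by (rule sum.remove) auto
  have c4: "card (?G 0) = q * q" using T_0 card_F qq by simp
  have body: "card (?G e) = q" if "e \<in> (UNIV::'a set) - {0}" for e
  proof -
    have "bij (\<lambda>y. f (y + e) - f y)" using plan_bij that by simp
    thus "card (?G e) = q" using card_bij_preimage[of "\<lambda>y. f (y + e) - f y" T] card_T by simp
  qed
  have c5: "(\<Sum>e\<in>UNIV - {0}. card (?G e)) = (\<Sum>e\<in>(UNIV::'a set) - {0}. q)"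
    by (rule sum.cong[OF refl body])
  have c6: "(\<Sum>e\<in>(UNIV::'a set) - {0}. q) = (q * q - 1) * q" using card_F qq by (simp add: card_Diff_singleton)
  show ?thesis using c1 c2 c3 c4 c5 c6 by simp
qed

lemma S0: "S 0 = {0}"
  using anis T_0 by (auto simp: S_def f_0)

lemma count_K: "c \<in> K \<Longrightarrow> c \<noteq> 0 \<Longrightarrow> card (S c) = q + 1"
proof -
  assume c: "c \<in> K" "c \<noteq> 0"
  define A where "A = K - {0}"
  define N where "N c = int (card (S c))" for c
  have cA: "card A = q - 1" using card_K K_0 by (simp add: A_def card_Diff_singleton)
  have finA: "finite A" by simp
  have s1: "(\<Sum>c\<in>A. N c) = int q * int q - 1"
  proof -
    have "(\<Sum>c\<in>K. N c) = N 0 + (\<Sum>c\<in>A. N c)" unfolding A_def by (rule sum.remove) (auto simp: K_0)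
    moreover have "(\<Sum>c\<in>K. N c) = int (q * q)" using sum1 by (simp add: N_def flip: of_nat_sum)
    moreover have "N 0 = 1" by (simp add: N_def S0)
    ultimately show ?thesis by simp
  qed
  have s2: "(\<Sum>c\<in>A. N c * N c) = int q * int q + (int q * int q - 1) * int q - 1"
  proof -
    have "(\<Sum>c\<in>K. N c * N c) = N 0 * N 0 + (\<Sum>c\<in>A. N c * N c)" unfolding A_def by (rule sum.remove) (auto simp: K_0)
    moreover have "(\<Sum>c\<in>K. N c * N c) = int (q * q + (q * q - 1) * q)"
      using card_R1 card_R2 by (simp add: N_def flip: of_nat_sum of_nat_mult)
    moreover have "int (q * q + (q * q - 1) * q) = int q * int q + (int q * int q - 1) * int q"
      using q_gt1 by (simp add: of_nat_diff)
    moreover have "N 0 = 1" by (simp add: N_def S0)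
    ultimately show ?thesis by simp
  qed
  have "(\<Sum>c\<in>A. (N c - (int q + 1))\<^sup>2) = (\<Sum>c\<in>A. N c * N c - 2 * (int q + 1) * N c + (int q + 1)\<^sup>2)"
    by (rule sum.cong) (simp_all add: power2_eq_square algebra_simps)
  also have "\<dots> = (\<Sum>c\<in>A. N c * N c) - 2 * (int q + 1) * (\<Sum>c\<in>A. N c) + int (card A) * (int q + 1)\<^sup>2"
    by (simp add: sum.distrib sum_subtractf sum_distrib_left)
  also have "\<dots> = 0" using q_gt1 by (simp add: s1 s2 cA of_nat_diff power2_eq_square algebra_simps)
  finally have z: "(\<Sum>c\<in>A. (N c - (int q + 1))\<^sup>2) = 0" .
  have "\<forall>c\<in>A. (N c - (int q + 1))\<^sup>2 = 0"
    using sum_nonneg_eq_0_iff[OF finA, of "\<lambda>c. (N c - (int q + 1))\<^sup>2"] z by simp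
  hence "(N c - (int q + 1))\<^sup>2 = 0" using c by (simp add: A_def)
  hence "int (card (S c)) = int (q + 1)" by (simp add: N_def)
  thus ?thesis by (simp only: of_nat_eq_iff)
qed

lemma count: "b \<notin> T \<Longrightarrow> card {y. f y - b \<in> T} = q + 1"
proof -
  assume b: "b \<notin> T"
  obtain c where c: "c \<in> K" "b - c \<in> T" using decomp by blast
  have "c \<noteq> 0" using b c by auto
  moreover have "{y. f y - b \<in> T} = S c" using S_shift[OF c(2)] by (simp add: S_def)
  ultimately show ?thesis using count_K c by simp
qed

subsection \<open>Existence of a suitable scaling\<close>

lemma two_to_one:
  fixes g :: "'a \<Rightarrow> 'b" and A :: "'a set"
  assumes fin: "finite A" and nz: "0 \<notin> A" and neg: "\<And>x. x \<in> A \<Longrightarrow> - x \<in> A"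
    and eq: "\<And>x y. x \<in> A \<Longrightarrow> y \<in> A \<Longrightarrow> g x = g y \<longleftrightarrow> (y = x \<or> y = - x)"
  shows "card A = 2 * card (g ` A)"
proof -
  have grp: "(\<Sum>w\<in>g ` A. card {x. x \<in> A \<and> g x = w}) = card A"
    using sum.group[of A "g ` A" g "\<lambda>_. 1::nat"] fin by simp
  have fib: "card {x. x \<in> A \<and> g x = w} = 2" if "w \<in> g ` A" for w
  proof -
    obtain x0 where x0: "x0 \<in> A" "w = g x0" using \<open>w \<in> g ` A\<close> by blast
    have "{x. x \<in> A \<and> g x = w} = {x0, - x0}"
      using x0 eq neg by auto
    moreover have "x0 \<noteq> - x0"
    proof
      assume "x0 = - x0" hence "x0 = 0" by (rule eq_neg_zero)
      thus False using x0 nz by simp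
    qed
    ultimately show ?thesis by simp
  qed
  have "(\<Sum>w\<in>g ` A. card {x. x \<in> A \<and> g x = w}) = (\<Sum>w\<in>g ` A. (2::nat))"
    by (rule sum.cong[OF refl fib])
  thus ?thesis using grp by simp
qed

lemma f_neg: "f (- x) = f x"
proof -
  have "even (s + 1)" using s_odd by simp
  thus ?thesis by (simp add: f_eq power_minus_even)
qed

lemma f_sq: "\<exists>z. z \<noteq> 0 \<and> f x = z\<^sup>2" if "x \<noteq> 0"
proof -
  obtain b where "s = 2 * b + 1" using s_odd by (auto elim!: oddE)
  hence "s + 1 = 2 * (b + 1)" by simp
  hence "f x = x ^ (2 * (b + 1))" by (simp add: f_eq)
  also have "\<dots> = (x ^ (b + 1))\<^sup>2" by (simp only: power_mult[symmetric] mult.commute)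
  finally have "f x = (x ^ (b + 1))\<^sup>2" .
  thus ?thesis using that by (intro exI[of _ "x ^ (b + 1)"]) simp
qed

lemma exists_kn: "\<exists>\<kappa> \<nu>. \<kappa> \<noteq> 0 \<and> \<nu> \<noteq> 0 \<and> \<nu> ^ s = \<nu> \<and> f \<kappa> * \<nu> = \<theta>"
proof -
  define F0 where "F0 = (UNIV::'a set) - {0}"
  define SQ where "SQ = (\<lambda>z. z\<^sup>2) ` F0"
  have finF0: "finite F0" by simp
  have sq_eq: "x\<^sup>2 = y\<^sup>2 \<longleftrightarrow> (y = x \<or> y = - x)" for x y :: 'a
    by (auto simp: power2_eq_iff)
  have cSQ: "card F0 = 2 * card SQ"
    unfolding SQ_def by (rule two_to_one) (auto simp: F0_def sq_eq)
  have f_eqv: "f x = f y \<longleftrightarrow> (y = x \<or> y = - x)" if "x \<in> F0" "y \<in> F0" for x y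
  proof
    assume h: "f x = f y"
    define w where "w = x / y"
    have y0: "y \<noteq> 0" "x \<noteq> 0" using that by (auto simp: F0_def)
    have "f y \<noteq> 0" using y0 by (simp add: f_eq)
    have "w ^ s * w = (x ^ s * x) / (y ^ s * y)" by (simp add: w_def power_divide)
    also have "\<dots> = f x / f y" by (simp add: f_alt)
    also have "\<dots> = 1" using h \<open>f y \<noteq> 0\<close> by simp
    finally have "w ^ s * w = 1" .
    moreover have "w \<noteq> 0" using y0 by (simp add: w_def)
    ultimately have "w = 1 \<or> w = -1" using no_inv by blast
    thus "y = x \<or> y = - x" using y0 by (auto simp: w_def field_simps)
  next
    assume "y = x \<or> y = - x"
    thus "f x = f y" using f_neg by auto
  qed
  have cFI: "card F0 = 2 * card (f ` F0)"
    by (rule two_to_one) (auto simp: F0_def f_eqv)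
  have FI_sub: "f ` F0 \<subseteq> SQ"
  proof
    fix r assume "r \<in> f ` F0"
    then obtain x where x: "x \<in> F0" "r = f x" by auto
    then obtain z where "z \<noteq> 0" "f x = z\<^sup>2" using f_sq by (auto simp: F0_def)
    thus "r \<in> SQ" using x by (auto simp: SQ_def F0_def)
  qed
  have FI: "f ` F0 = SQ"
    by (rule card_subset_eq) (use FI_sub cSQ cFI in auto)
  define E where "E = {z::'a. z \<noteq> 0 \<and> z ^ s = z}"
  have E1: "1 \<in> E" by (simp add: E_def)
  have cE: "card E = 2 * card ((\<lambda>z. z\<^sup>2) ` E)"
    by (rule two_to_one) (auto simp: E_def sq_eq sig_minus)
  have "(\<lambda>z. z\<^sup>2) ` E \<noteq> E"
  proof
    assume "(\<lambda>z. z\<^sup>2) ` E = E"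
    hence "card E = 0" using cE by simp
    thus False using E1 by simp
  qed
  moreover have "(\<lambda>z. z\<^sup>2) ` E \<subseteq> E"
  proof
    fix r assume "r \<in> (\<lambda>z. z\<^sup>2) ` E"
    then obtain z where z: "z \<in> E" "r = z\<^sup>2" by auto
    have "(z\<^sup>2) ^ s = (z ^ s)\<^sup>2" by (simp only: power_mult[symmetric] mult.commute)
    thus "r \<in> E" using z by (simp add: E_def)
  qed
  ultimately obtain \<nu>0 where nu0: "\<nu>0 \<in> E" "\<nu>0 \<notin> (\<lambda>z. z\<^sup>2) ` E" by blast
  have nu0_SQ: "\<nu>0 \<notin> SQ"
  proof
    assume "\<nu>0 \<in> SQ"
    then obtain z where z: "z \<noteq> 0" "\<nu>0 = z\<^sup>2" by (auto simp: SQ_def F0_def)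
    have "(z ^ s)\<^sup>2 = (z\<^sup>2) ^ s" by (simp only: power_mult[symmetric] mult.commute)
    also have "\<dots> = z\<^sup>2" using nu0(1) z by (simp add: E_def)
    finally have "z ^ s = z \<or> z ^ s = - z" by (simp add: sq_eq eq_commute)
    thus False
    proof
      assume "z ^ s = z" hence "z \<in> E" using z by (simp add: E_def)
      thus False using nu0 z by auto
    next
      assume "z ^ s = - z" hence "z = 0" by (rule no_neg)
      thus False using z by simp
    qed
  qed
  have th_SQ: "\<theta> \<notin> SQ"
  proof
    assume "\<theta> \<in> SQ"
    then obtain z where z: "\<theta> = z\<^sup>2" by (auto simp: SQ_def)
    have "\<theta> ^ (q + 1) = (z ^ (q + 1))\<^sup>2" by (simp only: z power_mult[symmetric] mult.commute)
    moreover have "z ^ (q + 1) \<in> K" by (rule norm_K)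
    ultimately have "\<exists>y\<in>K. y\<^sup>2 = \<theta> ^ (q + 1)" by (intro bexI[of _ "z ^ (q + 1)"]) simp_all
    thus False using hyp by simp
  qed
  define NS where "NS = F0 - SQ"
  have SQ_sub: "SQ \<subseteq> F0" by (auto simp: SQ_def F0_def)
  have cNS: "card NS = card SQ"
    using cSQ card_Diff_subset[OF finite_subset[OF SQ_sub finF0] SQ_sub] by (simp add: NS_def)
  have nu0nz: "\<nu>0 \<noteq> 0" using nu0 by (simp add: E_def)
  have img: "(\<lambda>r. \<nu>0 * r) ` SQ \<subseteq> NS"
  proof
    fix u assume "u \<in> (\<lambda>r. \<nu>0 * r) ` SQ"
    then obtain z where z: "z \<noteq> 0" "u = \<nu>0 * z\<^sup>2" by (auto simp: SQ_def F0_def)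
    have "u \<noteq> 0" using z nu0nz by simp
    moreover have "u \<notin> SQ"
    proof
      assume "u \<in> SQ"
      then obtain w where w: "u = w\<^sup>2" by (auto simp: SQ_def)
      hence e: "\<nu>0 * z\<^sup>2 = w\<^sup>2" using z by simp
      have "\<nu>0 = (w / z)\<^sup>2" using z(1) e by (simp add: power_divide field_simps)
      moreover have "w / z \<noteq> 0" using w z \<open>u \<noteq> 0\<close> by auto
      ultimately have "\<nu>0 \<in> SQ" by (auto simp: SQ_def F0_def)
      thus False using nu0_SQ by simp
    qed
    ultimately show "u \<in> NS" by (simp add: NS_def F0_def)
  qed
  have "inj_on (\<lambda>r. \<nu>0 * r) SQ" using nu0nz by (auto intro: inj_onI)
  hence "card ((\<lambda>r. \<nu>0 * r) ` SQ) = card NS" using cNS by (simp add: card_image)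
  hence imgeq: "(\<lambda>r. \<nu>0 * r) ` SQ = NS"
    by (rule_tac card_subset_eq) (use img in auto)
  have "\<theta> \<in> NS" using th_nz th_SQ by (simp add: NS_def F0_def)
  then obtain r where r: "r \<in> SQ" "\<theta> = \<nu>0 * r" using imgeq by blast
  then obtain \<kappa> where k: "\<kappa> \<in> F0" "r = f \<kappa>" using FI by blast
  show ?thesis
    using k r nu0 by (intro exI[of _ \<kappa>] exI[of _ \<nu>0]) (auto simp: F0_def E_def mult.commute)
qed

subsection \<open>Blocks\<close>

abbreviation "UU \<equiv> U_theta q \<theta>"

lemma U_aff: "Aff x y \<in> UU \<longleftrightarrow> y \<in> T"
  by (auto simp: U_theta_def T_def)

lemma U_Dir: "Dir a \<notin> UU"
  by (auto simp: U_theta_def)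

lemma on_L: "y = f (x + a) - b \<Longrightarrow> Aff x y \<in> pts f (L a b)"
  by auto

lemma blk_eq: "UU \<inter> pts f (L a b) = (\<lambda>x. Aff x (f (x + a) - b)) ` {x. f (x + a) - b \<in> T}"
  using U_aff U_Dir by auto

lemma blk_card: "b \<notin> T \<Longrightarrow> card (UU \<inter> pts f (L a b)) = q + 1"
proof -
  assume b: "b \<notin> T"
  have i1: "inj_on (\<lambda>x. Aff x (f (x + a) - b)) {x. f (x + a) - b \<in> T}"
    by (auto intro: inj_onI)
  have "{x. f (x + a) - b \<in> T} = (\<lambda>y. y - a) ` {y. f y - b \<in> T}"
    by (auto intro: image_eqI[of _ _ "_ + a"])
  moreover have "inj_on (\<lambda>y. y - a) {y. f y - b \<in> T}" by (auto intro: inj_onI)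
  ultimately have "card {x. f (x + a) - b \<in> T} = q + 1"
    using count[OF b] by (simp add: card_image)
  moreover have "card (UU \<inter> pts f (L a b)) = card {x. f (x + a) - b \<in> T}"
    unfolding blk_eq by (rule card_image[OF i1])
  ultimately show ?thesis by simp
qed

lemma is_blk: "b \<notin> T \<Longrightarrow> is_block f q UU (UU \<inter> pts f (L a b))"
  unfolding is_block_def using blk_card by blast

lemma blk_inter:
  assumes ne: "a \<noteq> a'" and P: "P \<in> UU" "P \<in> pts f (L a b)" "P \<in> pts f (L a' b')"
  shows "(UU \<inter> pts f (L a b)) \<inter> (UU \<inter> pts f (L a' b')) = {P}"
proof (intro equalityI subsetI)
  fix Z assume Z: "Z \<in> (UU \<inter> pts f (L a b)) \<inter> (UU \<inter> pts f (L a' b'))"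
  have inj: "inj (\<lambda>y. f (y + (a - a')) - f y)" using plan_inj ne by simp
  have key: "\<And>x y. Aff x y \<in> pts f (L a b) \<Longrightarrow> Aff x y \<in> pts f (L a' b') \<Longrightarrow>
      y = f (x + a) - b \<and> f ((x + a') + (a - a')) - f (x + a') = b - b'"
  proof -
    fix x y assume h1: "Aff x y \<in> pts f (L a b)" and h2: "Aff x y \<in> pts f (L a' b')"
    have fa: "f (x + a) = y + b" using h1 by auto
    have fa': "f (x + a') = y + b'" using h2 by auto
    have arg: "(x + a') + (a - a') = x + a" by simp
    show "y = f (x + a) - b \<and> f ((x + a') + (a - a')) - f (x + a') = b - b'"
      unfolding arg by (simp add: fa fa')
  qed
  obtain x y where Zxy: "Z = Aff x y" using Z U_Dir by (cases Z) (auto simp: U_theta_def)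
  obtain x0 y0 where Pxy: "P = Aff x0 y0" using P U_Dir by (cases P) (auto simp: U_theta_def)
  have k1: "y = f (x + a) - b" "f ((x + a') + (a - a')) - f (x + a') = b - b'"
    using key[of x y] Z Zxy by auto
  have k2: "y0 = f (x0 + a) - b" "f ((x0 + a') + (a - a')) - f (x0 + a') = b - b'"
    using key[of x0 y0] P Pxy by auto
  have "x + a' = x0 + a'" using injD[OF inj] k1(2) k2(2) by metis
  hence "x = x0" by simp
  thus "Z \<in> {P}" using Zxy Pxy k1 k2 by simp
next
  fix Z assume "Z \<in> {P}" thus "Z \<in> (UU \<inter> pts f (L a b)) \<inter> (UU \<inter> pts f (L a' b'))" using P by simp
qed

theorem main: "has_ONan f q UU"
proof -
  obtain \<kappa> \<nu> where kn: "\<kappa> \<noteq> 0" "\<nu> \<noteq> 0" "\<nu> ^ s = \<nu>" "f \<kappa> * \<nu> = \<theta>"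
    using exists_kn by blast
  define \<omega> where "\<omega> = f \<kappa>"
  have th: "\<theta> = \<omega> * \<nu>" using kn by (simp add: \<omega>_def)
  have fz: "f w = \<omega> * z\<^sup>2" if "w = \<kappa> * z" "z ^ s = z" for w z
    using that by (simp add: f_alt \<omega>_def power_mult_distrib power2_eq_square mult_ac)
  have one_s: "(1::'a) ^ s = 1" by simp
  have eA: "(1 - \<nu>) ^ s = 1 - \<nu>" by (simp add: sig_diff kn(3))
  have eB: "(1 + \<nu>) ^ s = 1 + \<nu>" by (simp add: sig_add kn(3))
  have eC: "(- (1 + \<nu>)) ^ s = - (1 + \<nu>)" by (simp only: sig_minus eB)
  have eD: "(\<nu> - 1) ^ s = \<nu> - 1" by (simp add: sig_diff kn(3))
  have inc: "Aff x y \<in> pts f (L a b)" if "x + a = \<kappa> * z" "z ^ s = z" "y = \<omega> * z\<^sup>2 - b" for x y a b z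
    using that fz[of "x + a" z] by (intro on_L) simp
  have thT: "\<theta> \<in> T" using T_mult[OF K_1] by simp
  have nu1: "\<nu> \<noteq> 1"
  proof
    assume "\<nu> = 1" hence "f \<kappa> \<in> T" using kn(4) thT by simp
    thus False using anis kn(1) by blast
  qed
  have nu1': "\<nu> \<noteq> -1"
  proof
    assume "\<nu> = -1" hence "- f \<kappa> = \<theta>" using kn(4) by simp
    hence "f \<kappa> = - \<theta>" by (metis minus_minus)
    hence "f \<kappa> \<in> T" using T_uminus[OF thT] by simp
    thus False using anis kn(1) by blast
  qed
  have two: "(2::'a) \<noteq> 0" by (rule two_nz)
  have "(2::'a) * 2 \<noteq> 0" by (rule no_zero_divisors[OF two two])
  hence four: "(4::'a) \<noteq> 0" by simp
  have "(2::'a) * 4 \<noteq> 0" by (rule no_zero_divisors[OF two four])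
  hence eight: "(8::'a) \<noteq> 0" by simp
  have nm1: "\<nu> - 1 \<noteq> 0" using nu1 by simp
  have np1: "\<nu> + 1 \<noteq> 0"
  proof
    assume h: "\<nu> + 1 = 0" have "\<nu> = -1" using h by (simp add: eq_neg_iff_add_eq_0)
    thus False using nu1' by simp
  qed
  have m1: "1 - \<nu> \<noteq> 0" using nu1 by simp
  have p1: "1 + \<nu> \<noteq> 0" using np1 by (simp add: add.commute)
  define b1 where "b1 = \<omega> * (1 - \<nu>)\<^sup>2"
  define b3 where "b3 = \<omega> * (1 + \<nu>)\<^sup>2 - 8 * \<theta>"
  define a1 where "a1 = \<kappa> * (1 - \<nu>)"
  define a2 where "a2 = - (\<kappa> * (1 - \<nu>))"
  define a3 where "a3 = - (\<kappa> * (1 + \<nu>))"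
  define a4 where "a4 = \<kappa> * (1 + \<nu>)"
  define P12 where "P12 = Aff (0::'a) 0"
  define P34 where "P34 = Aff (0::'a) (8 * \<theta>)"
  define P13 where "P13 = Aff (2 * \<kappa> * \<nu>) (4 * \<theta>)"
  define P14 where "P14 = Aff (- 2 * \<kappa>) (4 * \<theta>)"
  define P23 where "P23 = Aff (2 * \<kappa>) (4 * \<theta>)"
  define P24 where "P24 = Aff (- 2 * \<kappa> * \<nu>) (4 * \<theta>)"
  have i1_12: "P12 \<in> pts f (L a1 b1)" unfolding P12_def a1_def b1_def
    apply (rule inc[where z = "1 - \<nu>"])
      subgoal by (simp add: algebra_simps power2_eq_square)
     subgoal by (rule eA)
    subgoal unfolding th by (simp add: algebra_simps power2_eq_square)
    done
  have i1_13: "P13 \<in> pts f (L a1 b1)" unfolding P13_def a1_def b1_def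
    apply (rule inc[where z = "1 + \<nu>"])
      subgoal by (simp add: algebra_simps power2_eq_square)
     subgoal by (rule eB)
    subgoal unfolding th by (simp add: algebra_simps power2_eq_square)
    done
  have i1_14: "P14 \<in> pts f (L a1 b1)" unfolding P14_def a1_def b1_def
    apply (rule inc[where z = "- (1 + \<nu>)"])
      subgoal by (simp add: algebra_simps power2_eq_square)
     subgoal by (rule eC)
    subgoal unfolding th by (simp add: algebra_simps power2_eq_square)
    done
  have i2_12: "P12 \<in> pts f (L a2 b1)" unfolding P12_def a2_def b1_def
    apply (rule inc[where z = "\<nu> - 1"])
      subgoal by (simp add: algebra_simps power2_eq_square)
     subgoal by (rule eD)
    subgoal unfolding th by (simp add: algebra_simps power2_eq_square)
    done
  have i2_23: "P23 \<in> pts f (L a2 b1)" unfolding P23_def a2_def b1_def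
    apply (rule inc[where z = "1 + \<nu>"])
      subgoal by (simp add: algebra_simps power2_eq_square)
     subgoal by (rule eB)
    subgoal unfolding th by (simp add: algebra_simps power2_eq_square)
    done
  have i2_24: "P24 \<in> pts f (L a2 b1)" unfolding P24_def a2_def b1_def
    apply (rule inc[where z = "- (1 + \<nu>)"])
      subgoal by (simp add: algebra_simps power2_eq_square)
     subgoal by (rule eC)
    subgoal unfolding th by (simp add: algebra_simps power2_eq_square)
    done
  have i3_34: "P34 \<in> pts f (L a3 b3)" unfolding P34_def a3_def b3_def
    apply (rule inc[where z = "- (1 + \<nu>)"])
      subgoal by (simp add: algebra_simps power2_eq_square)
     subgoal by (rule eC)
    subgoal unfolding th by (simp add: algebra_simps power2_eq_square)
    done
  have i3_13: "P13 \<in> pts f (L a3 b3)" unfolding P13_def a3_def b3_def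
    apply (rule inc[where z = "\<nu> - 1"])
      subgoal by (simp add: algebra_simps power2_eq_square)
     subgoal by (rule eD)
    subgoal unfolding th by (simp add: algebra_simps power2_eq_square)
    done
  have i3_23: "P23 \<in> pts f (L a3 b3)" unfolding P23_def a3_def b3_def
    apply (rule inc[where z = "1 - \<nu>"])
      subgoal by (simp add: algebra_simps power2_eq_square)
     subgoal by (rule eA)
    subgoal unfolding th by (simp add: algebra_simps power2_eq_square)
    done
  have i4_34: "P34 \<in> pts f (L a4 b3)" unfolding P34_def a4_def b3_def
    apply (rule inc[where z = "1 + \<nu>"])
      subgoal by (simp add: algebra_simps power2_eq_square)
     subgoal by (rule eB)
    subgoal unfolding th by (simp add: algebra_simps power2_eq_square)
    done
  have i4_14: "P14 \<in> pts f (L a4 b3)" unfolding P14_def a4_def b3_def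
    apply (rule inc[where z = "\<nu> - 1"])
      subgoal by (simp add: algebra_simps power2_eq_square)
     subgoal by (rule eD)
    subgoal unfolding th by (simp add: algebra_simps power2_eq_square)
    done
  have i4_24: "P24 \<in> pts f (L a4 b3)" unfolding P24_def a4_def b3_def
    apply (rule inc[where z = "1 - \<nu>"])
      subgoal by (simp add: algebra_simps power2_eq_square)
     subgoal by (rule eA)
    subgoal unfolding th by (simp add: algebra_simps power2_eq_square)
    done
  have T4: "4 * \<theta> \<in> T" using T_mult[OF K_numeral] by blast
  have T8: "8 * \<theta> \<in> T" using T_mult[OF K_numeral] by blast
  have u12: "P12 \<in> UU" by (simp add: P12_def U_aff T_0)
  have u34: "P34 \<in> UU" by (simp add: P34_def U_aff T8)
  have u13: "P13 \<in> UU" by (simp add: P13_def U_aff T4)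
  have u14: "P14 \<in> UU" by (simp add: P14_def U_aff T4)
  have u23: "P23 \<in> UU" by (simp add: P23_def U_aff T4)
  have u24: "P24 \<in> UU" by (simp add: P24_def U_aff T4)
  have b1T: "b1 \<notin> T"
  proof
    assume "b1 \<in> T"
    moreover have "b1 = f (\<kappa> * (1 - \<nu>))" using fz[OF refl eA] by (simp add: b1_def)
    ultimately have "f (\<kappa> * (1 - \<nu>)) \<in> T" by simp
    hence "\<kappa> * (1 - \<nu>) = 0" by (rule anis)
    thus False using kn(1) m1 by simp
  qed
  have b3T: "b3 \<notin> T"
  proof
    assume "b3 \<in> T"
    hence "b3 + 8 * \<theta> \<in> T" using T8 T_add by blast
    moreover have "b3 + 8 * \<theta> = f (\<kappa> * (1 + \<nu>))" using fz[OF refl eB] by (simp add: b3_def)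
    ultimately have "f (\<kappa> * (1 + \<nu>)) \<in> T" by simp
    hence "\<kappa> * (1 + \<nu>) = 0" by (rule anis)
    thus False using kn(1) p1 by simp
  qed
  have d12: "a1 \<noteq> a2"
  proof
    assume "a1 = a2" hence "a1 = - a1" by (simp add: a2_def a1_def)
    hence "a1 = 0" by (rule eq_neg_zero)
    thus False using kn(1) m1 by (simp add: a1_def)
  qed
  have d34: "a3 \<noteq> a4"
  proof
    assume "a3 = a4" hence "a4 = - a4" by (simp add: a3_def a4_def)
    hence "a4 = 0" by (rule eq_neg_zero)
    thus False using kn(1) p1 by (simp add: a4_def)
  qed
  have d13: "a1 \<noteq> a3"
  proof
    assume h: "a1 = a3" have "2 * \<kappa> = a1 - a3" unfolding a1_def a3_def by (simp add: algebra_simps power2_eq_square)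
    hence "2 * \<kappa> = 0" using h by simp
    thus False using two kn(1) by simp
  qed
  have d24: "a2 \<noteq> a4"
  proof
    assume h: "a2 = a4" have "2 * \<kappa> = a4 - a2" unfolding a2_def a4_def by (simp add: algebra_simps power2_eq_square)
    hence "2 * \<kappa> = 0" using h by simp
    thus False using two kn(1) by simp
  qed
  have d14: "a1 \<noteq> a4"
  proof
    assume h: "a1 = a4" have "2 * \<kappa> * \<nu> = a4 - a1" unfolding a1_def a4_def by (simp add: algebra_simps power2_eq_square)
    hence "2 * \<kappa> * \<nu> = 0" using h by simp
    thus False using two kn(1,2) by simp
  qed
  have d23: "a2 \<noteq> a3"
  proof
    assume h: "a2 = a3" have "2 * \<kappa> * \<nu> = a2 - a3" unfolding a2_def a3_def by (simp add: algebra_simps power2_eq_square)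
    hence "2 * \<kappa> * \<nu> = 0" using h by simp
    thus False using two kn(1,2) by simp
  qed
  define B1 where "B1 = UU \<inter> pts f (L a1 b1)"
  define B2 where "B2 = UU \<inter> pts f (L a2 b1)"
  define B3 where "B3 = UU \<inter> pts f (L a3 b3)"
  define B4 where "B4 = UU \<inter> pts f (L a4 b3)"
  have I12: "B1 \<inter> B2 = {P12}" unfolding B1_def B2_def by (rule blk_inter[OF d12 u12 i1_12 i2_12])
  have I34: "B3 \<inter> B4 = {P34}" unfolding B3_def B4_def by (rule blk_inter[OF d34 u34 i3_34 i4_34])
  have I13: "B1 \<inter> B3 = {P13}" unfolding B1_def B3_def by (rule blk_inter[OF d13 u13 i1_13 i3_13])
  have I14: "B1 \<inter> B4 = {P14}" unfolding B1_def B4_def by (rule blk_inter[OF d14 u14 i1_14 i4_14])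
  have I23: "B2 \<inter> B3 = {P23}" unfolding B2_def B3_def by (rule blk_inter[OF d23 u23 i2_23 i3_23])
  have I24: "B2 \<inter> B4 = {P24}" unfolding B2_def B4_def by (rule blk_inter[OF d24 u24 i2_24 i4_24])
  have bl1: "is_block f q UU B1" unfolding B1_def by (rule is_blk[OF b1T])
  have bl2: "is_block f q UU B2" unfolding B2_def by (rule is_blk[OF b1T])
  have bl3: "is_block f q UU B3" unfolding B3_def by (rule is_blk[OF b3T])
  have bl4: "is_block f q UU B4" unfolding B4_def by (rule is_blk[OF b3T])
  have th0: "\<theta> \<noteq> 0" by (rule th_nz)
  have y4: "4 * \<theta> \<noteq> 0" using four th0 by simp
  have y8: "8 * \<theta> \<noteq> 0" using eight th0 by simp
  have y48: "4 * \<theta> \<noteq> 8 * \<theta>"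
  proof
    assume h: "4 * \<theta> = 8 * \<theta>" have "4 * \<theta> = 8 * \<theta> - 4 * \<theta>" by (simp add: algebra_simps power2_eq_square)
    moreover have "8 * \<theta> - 4 * \<theta> = 0"
    proof -
      have "8 * \<theta> - 4 * \<theta> = 8 * \<theta> - 8 * \<theta>" by (simp only: h)
      thus ?thesis by simp
    qed
    ultimately have "4 * \<theta> = 0" by (rule trans)
    thus False using y4 by simp
  qed
  have x1: "2 * \<kappa> * \<nu> \<noteq> - 2 * \<kappa>"
  proof
    assume h: "2 * \<kappa> * \<nu> = - 2 * \<kappa>"
    have c1: "2 * \<kappa> * (\<nu> + 1) = 2 * \<kappa> * \<nu> - (- 2 * \<kappa>)" by (simp add: algebra_simps power2_eq_square)
    have c2: "2 * \<kappa> * \<nu> - (- 2 * \<kappa>) = 0" using h by (rule iffD1[OF eq_iff_diff_eq_0])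
    from c1 c2 have "2 * \<kappa> * (\<nu> + 1) = 0" by (rule trans)
    thus False using two kn(1) np1 by simp
  qed
  have x2: "2 * \<kappa> * \<nu> \<noteq> 2 * \<kappa>"
  proof
    assume h: "2 * \<kappa> * \<nu> = 2 * \<kappa>"
    have c1: "2 * \<kappa> * (\<nu> - 1) = 2 * \<kappa> * \<nu> - 2 * \<kappa>" by (simp add: algebra_simps power2_eq_square)
    have c2: "2 * \<kappa> * \<nu> - 2 * \<kappa> = 0" using h by (rule iffD1[OF eq_iff_diff_eq_0])
    from c1 c2 have "2 * \<kappa> * (\<nu> - 1) = 0" by (rule trans)
    thus False using two kn(1) nm1 by simp
  qed
  have x3: "2 * \<kappa> * \<nu> \<noteq> - 2 * \<kappa> * \<nu>"
  proof
    assume h: "2 * \<kappa> * \<nu> = - 2 * \<kappa> * \<nu>"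
    have c1: "4 * \<kappa> * \<nu> = 2 * \<kappa> * \<nu> - (- 2 * \<kappa> * \<nu>)" by (simp add: algebra_simps power2_eq_square)
    have c2: "2 * \<kappa> * \<nu> - (- 2 * \<kappa> * \<nu>) = 0" using h by (rule iffD1[OF eq_iff_diff_eq_0])
    from c1 c2 have "4 * \<kappa> * \<nu> = 0" by (rule trans)
    thus False using four kn(1,2) by simp
  qed
  have x4: "- 2 * \<kappa> \<noteq> 2 * \<kappa>"
  proof
    assume h: "- 2 * \<kappa> = 2 * \<kappa>"
    have c1: "4 * \<kappa> = 2 * \<kappa> - (- 2 * \<kappa>)" by (simp add: algebra_simps power2_eq_square)
    have c2: "2 * \<kappa> - (- 2 * \<kappa>) = 0" using h[symmetric] by (rule iffD1[OF eq_iff_diff_eq_0])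
    from c1 c2 have "4 * \<kappa> = 0" by (rule trans)
    thus False using four kn(1) by simp
  qed
  have x5: "- 2 * \<kappa> \<noteq> - 2 * \<kappa> * \<nu>"
  proof
    assume h: "- 2 * \<kappa> = - 2 * \<kappa> * \<nu>"
    have c1: "2 * \<kappa> * (\<nu> - 1) = (- 2 * \<kappa>) - (- 2 * \<kappa> * \<nu>)" by (simp add: algebra_simps power2_eq_square)
    have c2: "(- 2 * \<kappa>) - (- 2 * \<kappa> * \<nu>) = 0" using h by (rule iffD1[OF eq_iff_diff_eq_0])
    from c1 c2 have "2 * \<kappa> * (\<nu> - 1) = 0" by (rule trans)
    thus False using two kn(1) nm1 by simp
  qed
  have x6: "2 * \<kappa> \<noteq> - 2 * \<kappa> * \<nu>"
  proof
    assume h: "2 * \<kappa> = - 2 * \<kappa> * \<nu>"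
    have c1: "2 * \<kappa> * (\<nu> + 1) = 2 * \<kappa> - (- 2 * \<kappa> * \<nu>)" by (simp add: algebra_simps power2_eq_square)
    have c2: "2 * \<kappa> - (- 2 * \<kappa> * \<nu>) = 0" using h by (rule iffD1[OF eq_iff_diff_eq_0])
    from c1 c2 have "2 * \<kappa> * (\<nu> + 1) = 0" by (rule trans)
    thus False using two kn(1) np1 by simp
  qed
  have x0a: "2 * \<kappa> * \<nu> \<noteq> 0" using two kn(1,2) by simp
  have x0b: "- 2 * \<kappa> \<noteq> 0" using two kn(1) by simp
  have x0c: "2 * \<kappa> \<noteq> 0" using two kn(1) by simp
  have x0d: "- 2 * \<kappa> * \<nu> \<noteq> 0" using two kn(1,2) by simp
  have dist: "P12 \<noteq> P34" "P12 \<noteq> P13" "P12 \<noteq> P14" "P12 \<noteq> P23" "P12 \<noteq> P24"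
    "P34 \<noteq> P13" "P34 \<noteq> P14" "P34 \<noteq> P23" "P34 \<noteq> P24"
    "P13 \<noteq> P14" "P13 \<noteq> P23" "P13 \<noteq> P24" "P14 \<noteq> P23" "P14 \<noteq> P24" "P23 \<noteq> P24"
    unfolding P12_def P34_def P13_def P14_def P23_def P24_def
    using y8 y4 y48 x1 x2 x3 x4 x5 x6 x0a x0b x0c x0d by (simp_all add: eq_commute[of 0])
  define Bl where "Bl i = (if i = 0 then B1 else if i = 1 then B2 else if i = 2 then B3 else B4)" for i :: nat
  define PP where "PP u v = (if u = 0 \<and> v = 1 then P12 else if u = 0 \<and> v = 2 then P13
      else if u = 0 \<and> v = 3 then P14 else if u = 1 \<and> v = 2 then P23 else if u = 1 \<and> v = 3 then P24
      else P34)" for u v :: nat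
  define Pt where "Pt i j = PP (min i j) (max i j)" for i j :: nat
  have "\<forall>i<4. is_block f q UU (Bl i)"
  proof (intro allI impI)
    fix i :: nat assume "i < 4"
    hence "i = 0 \<or> i = 1 \<or> i = 2 \<or> i = 3" by auto
    thus "is_block f q UU (Bl i)" using bl1 bl2 bl3 bl4 by (auto simp: Bl_def)
  qed
  moreover have "\<forall>i<4. \<forall>j<4. i \<noteq> j \<longrightarrow> Bl i \<inter> Bl j = {Pt i j}"
  proof (intro allI impI)
    fix i j :: nat assume "i < 4" "j < 4" "i \<noteq> j"
    hence "(i = 0 \<or> i = 1 \<or> i = 2 \<or> i = 3) \<and> (j = 0 \<or> j = 1 \<or> j = 2 \<or> j = 3) \<and> i \<noteq> j" by auto
    thus "Bl i \<inter> Bl j = {Pt i j}"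
      using I12 I34 I13 I14 I23 I24 by (auto simp: Bl_def Pt_def PP_def Int_commute)
  qed
  moreover have "inj_on (\<lambda>(i, j). Pt i j) {(i, j). i < j \<and> j < (4::nat)}"
  proof -
    have st: "{(i, j). i < j \<and> j < (4::nat)} = {(0,1),(0,2),(0,3),(1,2),(1,3),(2,3)}" by auto
    show ?thesis unfolding st using dist
      by (simp add: Pt_def PP_def inj_on_def)
  qed
  ultimately show ?thesis unfolding has_ONan_def by blast
qed

end

lemma fin_field_pow_card: "(x::'a::{field,finite}) ^ card (UNIV::'a set) = x"
proof (cases "x = 0")
  case False
  have "x * (\<Prod>y\<in>UNIV-{0}. x * y) = x * x ^ (card (UNIV :: 'a set) - 1) * \<Prod>(UNIV-{0})"
    by (simp add: prod.distrib mult_ac)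
  also have "x * x ^ (card (UNIV :: 'a set) - 1) = x ^ Suc (card (UNIV :: 'a set) - 1)"
    by (subst power_Suc) auto
  also have "Suc (card (UNIV :: 'a set) - 1) = card (UNIV :: 'a set)"
    using finite_UNIV_card_ge_0[where ?'a = 'a] by simp
  also have "(\<Prod>y\<in>UNIV-{0}. x * y) = (\<Prod>y\<in>UNIV-{0}. y)"
    by (rule prod.reindex_bij_witness[of _ "\<lambda>y. y / x" "\<lambda>y. x * y"]) (use False in auto)
  finally show ?thesis
    by simp
qed (use finite_UNIV_card_ge_0[where ?'a = 'a] in auto)

lemma fin_field_pow_card_iter: "(x::'a::{field,finite}) ^ (card (UNIV::'a set) ^ j) = x"
proof (induction j)
  case (Suc j)
  have "x ^ (card (UNIV::'a set) ^ Suc j) = (x ^ card (UNIV::'a set)) ^ (card (UNIV::'a set) ^ j)"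
    by (simp only: power_Suc power_mult)
  also have "\<dots> = x ^ (card (UNIV::'a set) ^ j)" by (simp only: fin_field_pow_card)
  also have "\<dots> = x" by (rule Suc.IH)
  finally show ?case .
qed simp

theorem theorem3p14:
  fixes p n k :: nat and f :: "'a::{field,finite} \<Rightarrow> 'a" and \<theta> :: 'a
  assumes "prime p" and "odd p" and "n \<ge> 1"
    and "card (UNIV :: 'a set) = p ^ (2 * n)"
    and "1 \<le> k" and "k \<le> n" and "odd ((2 * n) div gcd (2 * n) k)"
    and "f = (\<lambda>x. x ^ 2) \<or> f = (\<lambda>x. x ^ (p ^ k + 1))"
    and "\<theta> \<noteq> 0"
    and "\<not> (\<exists>y \<in> subfield_q (p ^ n). y ^ 2 = \<theta> ^ (p ^ n + 1))"
  shows "has_ONan f (p ^ n) (U_theta (p ^ n) \<theta>)"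
  using assms(8)
proof
  assume f2: "f = (\<lambda>x. x ^ 2)"
  have c: "ctx p n 1 1 f \<theta>"
  proof (unfold_locales)
    show "\<exists>m. 1 = p ^ m" by (rule exI[of _ 0]) simp
    show "f = (\<lambda>x. x ^ (1 + 1))" unfolding f2 by (simp only: one_add_one)
  qed (use assms in auto)
  show ?thesis by (rule ctx.main[OF c])
next
  assume fk: "f = (\<lambda>x. x ^ (p ^ k + 1))"
  define M where "M = (2 * n) div gcd (2 * n) k"
  have sMx: "x ^ ((p ^ k) ^ M) = x" for x :: 'a
  proof -
    define g where "g = gcd (2 * n) k"
    obtain b where kb: "k = g * b" using gcd_dvd2[of "2 * n" k] unfolding g_def dvd_def by blast
    have nM: "g * M = 2 * n" unfolding M_def g_def by (rule dvd_mult_div_cancel) simp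
    have e1: "(p ^ k) ^ M = p ^ (k * M)" by (simp only: power_mult)
    have e2: "k * M = (2 * n) * b" using kb nM by (metis mult.commute mult.left_commute)
    have e3: "p ^ ((2 * n) * b) = (card (UNIV::'a set)) ^ b" using assms(4) by (simp only: power_mult)
    show ?thesis unfolding e1 e2 e3 by (rule fin_field_pow_card_iter)
  qed
  have c: "ctx p n (p ^ k) M f \<theta>"
  proof (unfold_locales)
    show "\<exists>m. p ^ k = p ^ m" by blast
    show "odd M" using assms(7) by (simp add: M_def)
    show "x ^ ((p ^ k) ^ M) = x" for x :: 'a by (rule sMx)
    show "f = (\<lambda>x. x ^ (p ^ k + 1))" by (rule fk)
  qed (use assms in auto)
  show ?thesis by (rule ctx.main[OF c])
qed

end
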